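(* For any $\varepsilon\in(0,1)$, the second-order coding rate for the biometrical identification problem satisfies \begin{align} L^*(\varepsilon)=\sqrt{\mathrm{V}}\Phi^{-1}(\varepsilon). \end{align}
   Context: Biometrical identification problem: $\mathcal{X},\mathcal{Y},\mathcal{Z}$ are finite alphabets; $M$ feature vectors $X^n(1),\ldots,X^n(M)$ are generated i.i.d. according to $P_X^n$; for each $m$, $Y^n(m)$ is the output of a DMC $P_{Y|X}$ with input $X^n(m)$ and is stored without compression. An index $W$ uniform on $\{1,\ldots,M\}$, independent of everything else, is drawn; the user observes $Z^n$, the output of a DMC $P_{Z|X}$ with input $X^n(W)$, and outputs $\hat{W}=g^{(n)}(Y^n(1),\ldots,Y^n(M),Z^n)$ for a deterministic decoding function $g^{(n)}$; the error probability is $\mathrm{P}_\mathrm{e}^{(n)}(g^{(n)})=\Pr\{\hat{W}\neq W\}$. Let $M^*(n,\varepsilon)$ be the maximum number of items such that $\min_{g^{(n)}}\mathrm{P}_\mathrm{e}^{(n)}(g^{(n)})\leq \varepsilon$, and $L^*(\varepsilon):=\liminf_{n\to\infty}\frac{1}{\sqrt{n}} \big(\log M^*(n,\varepsilon)-nI(P_Y,P_{Z|Y}) \big)$. Here $(Y,Z)\sim P_{YZ}$ induced by $P_X\times P_{Y|X}\times P_{Z|X}$, $\mathrm{V}:=\mathrm{Var}\left[\log\frac{P_{Z|Y}(Z|Y)}{P_Z(Z)}\right]>0$ is assumed, and $\Phi^{-1}$ is the inverse of the standard Gaussian cumulative distribution function. *)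

theory Defs
  imports "HOL-Probability.Probability"
begin

definition Phi :: "real \<Rightarrow> real" where
  "Phi = cdf (density lborel std_normal_density)"

definition Phi_inv :: "real \<Rightarrow> real" where
  "Phi_inv e = (THE t. Phi t = e)"

definition seqs :: "nat \<Rightarrow> 'a list set" where
  "seqs n = {xs. length xs = n}"

definition iid_prob :: "'a pmf \<Rightarrow> 'a list \<Rightarrow> real" where
  "iid_prob P xs = prod_list (map (pmf P) xs)"

definition dmc_prob :: "('a \<Rightarrow> 'b pmf) \<Rightarrow> 'a list \<Rightarrow> 'b list \<Rightarrow> real" where
  "dmc_prob W xs ys = prod_list (map2 (\<lambda>a b. pmf (W a) b) xs ys)"

text \<open>Items are indexed by 0..M-1. A decoder maps the stored database
  (Y^n(0),...,Y^n(M-1)) and the observation Z^n to an index.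
  Error probability Pr{g(Y^n(0..M-1), Z^n) != W} with W uniform on {0..<M}.\<close>
definition err_prob ::
  "'x pmf \<Rightarrow> ('x \<Rightarrow> 'y pmf) \<Rightarrow> ('x \<Rightarrow> 'z pmf) \<Rightarrow> nat \<Rightarrow> nat
    \<Rightarrow> ((nat \<Rightarrow> 'y list) \<Rightarrow> 'z list \<Rightarrow> nat) \<Rightarrow> real" where
  "err_prob PX PYX PZX n M g =
     (\<Sum>w<M. \<Sum>xs\<in>PiE {..<M} (\<lambda>_. seqs n). \<Sum>ys\<in>PiE {..<M} (\<lambda>_. seqs n). \<Sum>zs\<in>seqs n.
        (\<Prod>m<M. iid_prob PX (xs m) * dmc_prob PYX (xs m) (ys m))
        * dmc_prob PZX (xs w) zs * (if g ys zs \<noteq> w then 1 else 0)) / real M"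

definition Mstar ::
  "'x pmf \<Rightarrow> ('x \<Rightarrow> 'y pmf) \<Rightarrow> ('x \<Rightarrow> 'z pmf) \<Rightarrow> nat \<Rightarrow> real \<Rightarrow> nat" where
  "Mstar PX PYX PZX n eps =
     Max {M. 1 \<le> M \<and> (\<exists>g. err_prob PX PYX PZX n M g \<le> eps)}"

definition PYZ :: "'x::finite pmf \<Rightarrow> ('x \<Rightarrow> 'y pmf) \<Rightarrow> ('x \<Rightarrow> 'z pmf) \<Rightarrow> 'y \<Rightarrow> 'z \<Rightarrow> real" where
  "PYZ PX PYX PZX y z = (\<Sum>x\<in>UNIV. pmf PX x * pmf (PYX x) y * pmf (PZX x) z)"

definition PY :: "'x::finite pmf \<Rightarrow> ('x \<Rightarrow> 'y pmf) \<Rightarrow> ('x \<Rightarrow> 'z::finite pmf) \<Rightarrow> 'y \<Rightarrow> real" where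
  "PY PX PYX PZX y = (\<Sum>z\<in>UNIV. PYZ PX PYX PZX y z)"

definition PZ :: "'x::finite pmf \<Rightarrow> ('x \<Rightarrow> 'y::finite pmf) \<Rightarrow> ('x \<Rightarrow> 'z pmf) \<Rightarrow> 'z \<Rightarrow> real" where
  "PZ PX PYX PZX z = (\<Sum>y\<in>UNIV. PYZ PX PYX PZX y z)"

definition info_dens :: "'x::finite pmf \<Rightarrow> ('x \<Rightarrow> 'y::finite pmf) \<Rightarrow> ('x \<Rightarrow> 'z::finite pmf) \<Rightarrow> 'y \<Rightarrow> 'z \<Rightarrow> real" where
  "info_dens PX PYX PZX y z =
     ln ((PYZ PX PYX PZX y z / PY PX PYX PZX y) / PZ PX PYX PZX z)"

definition mutual_info :: "'x::finite pmf \<Rightarrow> ('x \<Rightarrow> 'y::finite pmf) \<Rightarrow> ('x \<Rightarrow> 'z::finite pmf) \<Rightarrow> real" where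
  "mutual_info PX PYX PZX =
     (\<Sum>y\<in>UNIV. \<Sum>z\<in>UNIV. PYZ PX PYX PZX y z * info_dens PX PYX PZX y z)"

definition dispersion :: "'x::finite pmf \<Rightarrow> ('x \<Rightarrow> 'y::finite pmf) \<Rightarrow> ('x \<Rightarrow> 'z::finite pmf) \<Rightarrow> real" where
  "dispersion PX PYX PZX =
     (\<Sum>y\<in>UNIV. \<Sum>z\<in>UNIV. PYZ PX PYX PZX y z *
        (info_dens PX PYX PZX y z - mutual_info PX PYX PZX)\<^sup>2)"

end

theory Submission
  imports Defs "HOL-Library.FuncSet"
begin

lemma Phi_eq: "Phi = cdf std_normal_distribution" unfolding Phi_def by simp

interpretation stdN: real_distribution std_normal_distribution by (rule real_dist_normal_dist)

lemma Phi_cont: "isCont Phi x"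
proof -
  have "emeasure std_normal_distribution {x} = 0"
    by (subst emeasure_density) (auto intro!: nn_integral_null_set)
  then show ?thesis unfolding Phi_eq stdN.isCont_cdf by (simp add: measure_def)
qed

lemma Phi_strict: assumes "a < b" shows "Phi a < Phi b"
proof -
  define m where "m = (1 / sqrt (2 * pi)) * exp (- (max (a^2) (b^2)) / 2)"
  have mpos: "m > 0" unfolding m_def by simp
  have low: "m \<le> std_normal_density x" if "x \<in> {a<..b}" for x
  proof -
    have x: "a < x" "x \<le> b" using that by auto
    have "x^2 \<le> max (a^2) (b^2)"
    proof (cases "x \<ge> 0")
      case True
      then have "x^2 \<le> b^2" using x by (intro power_mono) auto
      then show ?thesis by simp
    next
      case False
      then have "(-x)^2 \<le> (-a)^2" using x by (intro power_mono) auto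
      then show ?thesis by simp
    qed
    then have "exp (- (max (a^2) (b^2)) / 2) \<le> exp (- (x^2) / 2)" by simp
    then show ?thesis unfolding m_def std_normal_density_def
      by (intro mult_left_mono) auto
  qed
  have "ennreal (m * (b - a)) = (\<integral>\<^sup>+ x. ennreal m * indicator {a<..b} x \<partial>lborel)"
    using assms mpos by (simp add: nn_integral_cmult ennreal_mult)
  also have "\<dots> \<le> (\<integral>\<^sup>+ x. ennreal (std_normal_density x) * indicator {a<..b} x \<partial>lborel)"
    by (intro nn_integral_mono) (auto split: split_indicator intro: low)
  also have "\<dots> = emeasure std_normal_distribution {a<..b}"
    by (subst emeasure_density) auto
  finally have "m * (b - a) \<le> measure std_normal_distribution {a<..b}"
    by (simp add: stdN.emeasure_eq_measure)
  moreover have "m * (b - a) > 0" using mpos assms by simp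
  ultimately show ?thesis unfolding Phi_eq using stdN.cdf_diff_eq[OF assms] by simp
qed

lemma Phi_inv: assumes "0 < e" "e < 1" shows "Phi (Phi_inv e) = e"
proof -
  have "\<exists>t. Phi t = e"
  proof -
    from stdN.cdf_lim_at_bot have "eventually (\<lambda>t. Phi t < e) at_bot"
      unfolding Phi_eq using assms by (intro order_tendstoD) auto
    then obtain a where a: "Phi a < e" by (auto simp: eventually_at_bot_linorder)
    from stdN.cdf_lim_at_top_prob have "eventually (\<lambda>t. Phi t > e) at_top"
      unfolding Phi_eq using assms by (intro order_tendstoD) auto
    then have "eventually (\<lambda>t. Phi t > e \<and> t \<ge> a) at_top"
      by (intro eventually_conj eventually_ge_at_top)
    then obtain N where "\<forall>t\<ge>N. Phi t > e \<and> t \<ge> a" by (auto simp: eventually_at_top_linorder)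
    then obtain b where b: "Phi b > e" "b \<ge> a" by blast
    have "\<exists>x\<ge>a. x \<le> b \<and> Phi x = e"
      by (rule IVT) (use a b Phi_cont in auto)
    then show ?thesis by blast
  qed
  then obtain t where t: "Phi t = e" by blast
  have "Phi_inv e = t" unfolding Phi_inv_def
  proof (rule the_equality)
    fix s assume s: "Phi s = e"
    show "s = t"
    proof (rule ccontr)
      assume "s \<noteq> t"
      then have "s < t \<or> t < s" by auto
      then show False using Phi_strict[of s t] Phi_strict[of t s] s t by auto
    qed
  qed (rule t)
  then show ?thesis using t by simp
qed


lemma finite_seqs[simp]: "finite (seqs n :: ('a::finite) list set)"
proof -
  have "seqs n = {xs::'a list. set xs \<subseteq> UNIV \<and> length xs = n}" unfolding seqs_def by auto
  then show ?thesis using finite_lists_length_eq[of "UNIV::'a set" n] by simp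
qed

lemma seqs_0[simp]: "seqs 0 = {[]}" unfolding seqs_def by auto

lemma sum_seqs_Suc:
  fixes f :: "('a::finite) list \<Rightarrow> 'b::comm_monoid_add"
  shows "(\<Sum>xs\<in>seqs (Suc n). f xs) = (\<Sum>x\<in>UNIV. \<Sum>xs\<in>seqs n. f (x#xs))"
proof -
  have eq: "seqs (Suc n) = (\<lambda>(x,xs). x#xs) ` (UNIV \<times> seqs n)"
    unfolding seqs_def by (auto simp: image_iff length_Suc_conv)
  have inj: "inj_on (\<lambda>(x,xs). x#xs) (UNIV \<times> seqs n)" by (auto simp: inj_on_def)
  have "(\<Sum>xs\<in>seqs (Suc n). f xs) = (\<Sum>p\<in>UNIV \<times> seqs n. f (fst p # snd p))"
    unfolding eq sum.reindex[OF inj] by (intro sum.cong) auto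
  also have "\<dots> = (\<Sum>x\<in>UNIV. \<Sum>xs\<in>seqs n. f (x#xs))"
    by (subst sum.cartesian_product) (simp add: case_prod_beta)
  finally show ?thesis .
qed

lemma seqs_mem[simp]: "xs \<in> seqs n \<longleftrightarrow> length xs = n" unfolding seqs_def by simp

lemma G1:
  fixes F :: "'a::finite \<Rightarrow> 'b \<Rightarrow> real"
  shows "length ys = n \<Longrightarrow> (\<Sum>xs\<in>seqs n. prod_list (map2 F xs ys)) = prod_list (map (\<lambda>y. \<Sum>x\<in>UNIV. F x y) ys)"
proof (induction ys arbitrary: n)
  case Nil then show ?case by simp
next
  case (Cons y ys)
  then obtain m where n: "n = Suc m" "length ys = m" by auto
  have "(\<Sum>xs\<in>seqs n. prod_list (map2 F xs (y#ys))) = (\<Sum>x\<in>UNIV. \<Sum>xs\<in>seqs m. F x y * prod_list (map2 F xs ys))"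
    unfolding n sum_seqs_Suc by simp
  also have "\<dots> = (\<Sum>x\<in>UNIV. F x y * (\<Sum>xs\<in>seqs m. prod_list (map2 F xs ys)))"
    by (simp add: sum_distrib_left)
  also have "\<dots> = (\<Sum>x\<in>UNIV. F x y) * prod_list (map (\<lambda>y. \<Sum>x\<in>UNIV. F x y) ys)"
    using Cons.IH[OF n(2)] by (simp add: sum_distrib_right)
  finally show ?case by simp
qed

lemma G2:
  fixes F :: "'a \<Rightarrow> 'b::finite \<Rightarrow> real"
  shows "length xs = n \<Longrightarrow> (\<Sum>ys\<in>seqs n. prod_list (map2 F xs ys)) = prod_list (map (\<lambda>x. \<Sum>y\<in>UNIV. F x y) xs)"
proof (induction xs arbitrary: n)
  case Nil then show ?case by simp
next
  case (Cons x xs)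
  then obtain m where n: "n = Suc m" "length xs = m" by auto
  have "(\<Sum>ys\<in>seqs n. prod_list (map2 F (x#xs) ys)) = (\<Sum>y\<in>UNIV. \<Sum>ys\<in>seqs m. F x y * prod_list (map2 F xs ys))"
    unfolding n sum_seqs_Suc by simp
  also have "\<dots> = (\<Sum>y\<in>UNIV. F x y * (\<Sum>ys\<in>seqs m. prod_list (map2 F xs ys)))"
    by (simp add: sum_distrib_left)
  also have "\<dots> = (\<Sum>y\<in>UNIV. F x y) * prod_list (map (\<lambda>x. \<Sum>y\<in>UNIV. F x y) xs)"
    using Cons.IH[OF n(2)] by (simp add: sum_distrib_right)
  finally show ?case by simp
qed

lemma G0:
  fixes f :: "'a::finite \<Rightarrow> real"
  shows "(\<Sum>xs\<in>seqs n. prod_list (map f xs)) = (\<Sum>x\<in>UNIV. f x) ^ n"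
proof (induction n)
  case 0 then show ?case by simp
next
  case (Suc n)
  show ?case unfolding sum_seqs_Suc
    by (simp add: sum_distrib_left[symmetric] Suc sum_distrib_right[symmetric])
qed

lemma prod_list_nonneg_map: "(\<And>x. f x \<ge> (0::real)) \<Longrightarrow> prod_list (map f xs) \<ge> 0"
  by (induction xs) auto

lemma iid_dmc: "length xs = length ys \<Longrightarrow>
   iid_prob PX xs * dmc_prob PYX xs ys = prod_list (map2 (\<lambda>x y. pmf PX x * pmf (PYX x) y) xs ys)"
  by (induction xs ys rule: list_induct2) (auto simp: iid_prob_def dmc_prob_def)

lemma iid_dmc_dmc: "length xs = length ys \<Longrightarrow> length xs = length zs \<Longrightarrow>
   iid_prob PX xs * dmc_prob PYX xs ys * dmc_prob PZX xs zs =
   prod_list (map2 (\<lambda>x (y,z). pmf PX x * pmf (PYX x) y * pmf (PZX x) z) xs (zip ys zs))"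
proof (induction xs arbitrary: ys zs)
  case Nil then show ?case by (simp add: iid_prob_def dmc_prob_def)
next
  case (Cons x xs)
  then obtain y ys' z zs' where yz: "ys = y#ys'" "zs = z#zs'" by (metis length_Suc_conv)
  have l: "length xs = length ys'" "length xs = length zs'" using Cons.prems yz by auto
  have "iid_prob PX (x#xs) * dmc_prob PYX (x#xs) ys * dmc_prob PZX (x#xs) zs =
     (pmf PX x * pmf (PYX x) y * pmf (PZX x) z) * (iid_prob PX xs * dmc_prob PYX xs ys' * dmc_prob PZX xs zs')"
    by (simp add: iid_prob_def dmc_prob_def yz mult_ac)
  also have "\<dots> = (pmf PX x * pmf (PYX x) y * pmf (PZX x) z) *
      prod_list (map2 (\<lambda>x (y,z). pmf PX x * pmf (PYX x) y * pmf (PZX x) z) xs (zip ys' zs'))"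
    using Cons.IH[OF l] by simp
  finally show ?case by (simp add: yz)
qed

locale bio =
  fixes PX :: "'x::finite pmf" and PYX :: "'x \<Rightarrow> 'y::finite pmf" and PZX :: "'x \<Rightarrow> 'z::finite pmf"
begin

abbreviation "pyz \<equiv> PYZ PX PYX PZX"
abbreviation "py \<equiv> PY PX PYX PZX"
abbreviation "pz \<equiv> PZ PX PYX PZX"
abbreviation "idn \<equiv> info_dens PX PYX PZX"
abbreviation "MI \<equiv> mutual_info PX PYX PZX"
abbreviation "DV \<equiv> dispersion PX PYX PZX"

definition Jn :: "'y list \<Rightarrow> 'z list \<Rightarrow> real" where "Jn ys zs = prod_list (map2 pyz ys zs)"
definition PYn :: "'y list \<Rightarrow> real" where "PYn ys = prod_list (map py ys)"
definition PZn :: "'z list \<Rightarrow> real" where "PZn zs = prod_list (map pz zs)"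
definition infn :: "'y list \<Rightarrow> 'z list \<Rightarrow> real" where "infn ys zs = sum_list (map2 idn ys zs)"
definition Fn :: "nat \<Rightarrow> real \<Rightarrow> real" where
  "Fn n t = (\<Sum>ys\<in>seqs n. \<Sum>zs\<in>seqs n. Jn ys zs * (if infn ys zs \<le> t then 1 else 0))"

lemma pyz_nonneg[simp]: "pyz y z \<ge> 0"
  unfolding PYZ_def by (intro sum_nonneg) auto

lemma pyz_alt: "pyz y z = (\<Sum>x\<in>UNIV. pmf PX x * pmf (PYX x) y * pmf (PZX x) z)"
  unfolding PYZ_def by simp

lemma sum_pmf_UNIV: "(\<Sum>x\<in>UNIV. pmf (p::('a::finite) pmf) x) = 1"
  by (rule sum_pmf_eq_1) auto

lemma py_alt: "py y = (\<Sum>x\<in>UNIV. pmf PX x * pmf (PYX x) y)"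
proof -
  have "py y = (\<Sum>x\<in>UNIV. \<Sum>z\<in>UNIV. pmf PX x * pmf (PYX x) y * pmf (PZX x) z)"
    unfolding PY_def PYZ_def by (rule sum.swap)
  also have "\<dots> = (\<Sum>x\<in>UNIV. pmf PX x * pmf (PYX x) y * (\<Sum>z\<in>UNIV. pmf (PZX x) z))"
    by (simp add: sum_distrib_left)
  finally show ?thesis by (simp add: sum_pmf_UNIV)
qed

lemma pz_alt: "pz z = (\<Sum>x\<in>UNIV. pmf PX x * pmf (PZX x) z)"
proof -
  have "pz z = (\<Sum>x\<in>UNIV. \<Sum>y\<in>UNIV. pmf PX x * pmf (PYX x) y * pmf (PZX x) z)"
    unfolding PZ_def PYZ_def by (rule sum.swap)
  also have "\<dots> = (\<Sum>x\<in>UNIV. pmf PX x * pmf (PZX x) z * (\<Sum>y\<in>UNIV. pmf (PYX x) y))"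
    by (simp add: sum_distrib_left sum_distrib_right mult_ac)
  finally show ?thesis by (simp add: sum_pmf_UNIV)
qed

lemma py_nonneg[simp]: "py y \<ge> 0" unfolding PY_def by (intro sum_nonneg) auto
lemma pz_nonneg[simp]: "pz z \<ge> 0" unfolding PZ_def by (intro sum_nonneg) auto

lemma sum_py: "(\<Sum>y\<in>UNIV. py y) = 1"
proof -
  have "(\<Sum>y\<in>UNIV. py y) = (\<Sum>x\<in>UNIV. \<Sum>y\<in>UNIV. pmf PX x * pmf (PYX x) y)"
    unfolding py_alt by (rule sum.swap)
  also have "\<dots> = (\<Sum>x\<in>UNIV. pmf PX x * (\<Sum>y\<in>UNIV. pmf (PYX x) y))"
    by (simp add: sum_distrib_left)
  finally show ?thesis by (simp add: sum_pmf_UNIV)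
qed

lemma sum_pz: "(\<Sum>z\<in>UNIV. pz z) = 1"
proof -
  have "(\<Sum>z\<in>UNIV. pz z) = (\<Sum>x\<in>UNIV. \<Sum>z\<in>UNIV. pmf PX x * pmf (PZX x) z)"
    unfolding pz_alt by (rule sum.swap)
  also have "\<dots> = (\<Sum>x\<in>UNIV. pmf PX x * (\<Sum>z\<in>UNIV. pmf (PZX x) z))"
    by (simp add: sum_distrib_left)
  finally show ?thesis by (simp add: sum_pmf_UNIV)
qed

lemma sum_pyz: "(\<Sum>y\<in>UNIV. \<Sum>z\<in>UNIV. pyz y z) = 1"
  using sum_py unfolding PY_def by simp

lemma pyz_le_py: "pyz y z \<le> py y"
  unfolding PY_def by (rule member_le_sum) auto

lemma pyz_le_pz: "pyz y z \<le> pz z"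
  unfolding PZ_def by (rule member_le_sum) auto

lemma pyz_pos: assumes "pyz y z > 0"
  shows "py y > 0" "pz z > 0" "pyz y z = exp (idn y z) * (py y * pz z)"
proof -
  show p1: "py y > 0" using assms pyz_le_py[of y z] by linarith
  show p2: "pz z > 0" using assms pyz_le_pz[of y z] by linarith
  have "exp (idn y z) = pyz y z / py y / pz z"
    unfolding info_dens_def using assms p1 p2 by simp
  then show "pyz y z = exp (idn y z) * (py y * pz z)" using p1 p2 by (simp add: field_simps)
qed

lemma Jn_nonneg[simp]: "Jn ys zs \<ge> 0"
  unfolding Jn_def by (induction ys zs rule: list_induct2') auto
lemma PYn_nonneg[simp]: "PYn ys \<ge> 0" unfolding PYn_def by (rule prod_list_nonneg_map) simp
lemma PZn_nonneg[simp]: "PZn zs \<ge> 0" unfolding PZn_def by (rule prod_list_nonneg_map) simp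

lemma sum_Jn_zs: "length ys = n \<Longrightarrow> (\<Sum>zs\<in>seqs n. Jn ys zs) = PYn ys"
  unfolding Jn_def PYn_def by (subst G2) (auto simp: PY_def intro!: arg_cong[where f=prod_list] map_cong)

lemma sum_Jn_ys: "length zs = n \<Longrightarrow> (\<Sum>ys\<in>seqs n. Jn ys zs) = PZn zs"
  unfolding Jn_def PZn_def by (subst G1) (auto simp: PZ_def intro!: arg_cong[where f=prod_list] map_cong)

lemma sum_PYn: "(\<Sum>ys\<in>seqs n. PYn ys) = 1"
  unfolding PYn_def G0 sum_py by simp

lemma sum_PZn: "(\<Sum>zs\<in>seqs n. PZn zs) = 1"
  unfolding PZn_def G0 sum_pz by simp

lemma sum_Jn: "(\<Sum>ys\<in>seqs n. \<Sum>zs\<in>seqs n. Jn ys zs) = 1"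
  by (simp add: sum_Jn_zs sum_PYn)

lemma Jn_pos: "length ys = length zs \<Longrightarrow> Jn ys zs > 0 \<Longrightarrow> Jn ys zs = exp (infn ys zs) * (PYn ys * PZn zs)"
proof (induction ys zs rule: list_induct2)
  case Nil then show ?case by (simp add: Jn_def infn_def PYn_def PZn_def)
next
  case (Cons y ys z zs)
  have a: "pyz y z > 0" "Jn ys zs > 0"
    using Cons.prems pyz_nonneg[of y z] Jn_nonneg[of ys zs]
    by (auto simp: Jn_def zero_less_mult_iff)
  have "Jn (y#ys) (z#zs) = pyz y z * Jn ys zs" by (simp add: Jn_def)
  also have "\<dots> = exp (idn y z) * (py y * pz z) * (exp (infn ys zs) * (PYn ys * PZn zs))"
    using pyz_pos(3)[OF a(1)] Cons.IH[OF a(2)] by simp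
  also have "\<dots> = exp (infn (y#ys) (z#zs)) * (PYn (y#ys) * PZn (z#zs))"
    by (simp add: infn_def PYn_def PZn_def exp_add)
  finally show ?case .
qed

lemma sum_xs_PY: "length ys = n \<Longrightarrow> (\<Sum>xs\<in>seqs n. iid_prob PX xs * dmc_prob PYX xs ys) = PYn ys"
proof -
  assume l: "length ys = n"
  have "(\<Sum>xs\<in>seqs n. iid_prob PX xs * dmc_prob PYX xs ys) =
        (\<Sum>xs\<in>seqs n. prod_list (map2 (\<lambda>x y. pmf PX x * pmf (PYX x) y) xs ys))"
    using l by (intro sum.cong) (auto simp: iid_dmc)
  also have "\<dots> = PYn ys" using l by (subst G1) (auto simp: PYn_def py_alt intro!: arg_cong[where f=prod_list] map_cong)
  finally show ?thesis .
qed

lemma sum_xs_J: "length ys = n \<Longrightarrow> length zs = n \<Longrightarrow>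
   (\<Sum>xs\<in>seqs n. iid_prob PX xs * dmc_prob PYX xs ys * dmc_prob PZX xs zs) = Jn ys zs"
proof -
  assume l: "length ys = n" "length zs = n"
  have "(\<Sum>xs\<in>seqs n. iid_prob PX xs * dmc_prob PYX xs ys * dmc_prob PZX xs zs) =
        (\<Sum>xs\<in>seqs n. prod_list (map2 (\<lambda>x (y,z). pmf PX x * pmf (PYX x) y * pmf (PZX x) z) xs (zip ys zs)))"
    using l by (intro sum.cong) (auto simp: iid_dmc_dmc)
  also have "\<dots> = prod_list (map (\<lambda>(y,z). pyz y z) (zip ys zs))"
    using l by (subst G1) (auto simp: pyz_alt intro!: arg_cong[where f=prod_list])
  also have "\<dots> = Jn ys zs" by (simp add: Jn_def)
  finally show ?thesis .
qed

end


definition DB :: "nat \<Rightarrow> nat \<Rightarrow> (nat \<Rightarrow> 'a list) set" where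
  "DB n M = PiE {..<M} (\<lambda>_. seqs n)"

lemma finite_DB[simp]: "finite (DB n M :: (nat \<Rightarrow> ('a::finite) list) set)"
  unfolding DB_def by (intro finite_PiE) auto

context bio begin

definition K :: "nat \<Rightarrow> nat \<Rightarrow> (nat \<Rightarrow> 'y list) \<Rightarrow> 'z list \<Rightarrow> real" where
  "K M w ys zs = (\<Prod>m\<in>{..<M}-{w}. PYn (ys m)) * Jn (ys w) zs"

lemma K_nonneg[simp]: "K M w ys zs \<ge> 0"
  unfolding K_def by (intro mult_nonneg_nonneg prod_nonneg) auto

lemma sum_PiE_prod:
  fixes h :: "nat \<Rightarrow> 'a \<Rightarrow> real"
  assumes "finite S"
  shows "(\<Sum>ys\<in>PiE {..<M} (\<lambda>_. S). \<Prod>m<M. h m (ys m)) = (\<Prod>m<M. \<Sum>y\<in>S. h m y)"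
  using prod_sum_PiE[of "{..<M}" "\<lambda>_. S" h] assms by simp

lemma err_red:
  "err_prob PX PYX PZX n M g =
    (\<Sum>w<M. \<Sum>ys\<in>DB n M. \<Sum>zs\<in>seqs n. K M w ys zs * (if g ys zs \<noteq> w then 1 else 0)) / real M"
proof -
  have "(\<Sum>xs\<in>PiE {..<M} (\<lambda>_. seqs n). \<Sum>ys\<in>PiE {..<M} (\<lambda>_. seqs n). \<Sum>zs\<in>seqs n.
        (\<Prod>m<M. iid_prob PX (xs m) * dmc_prob PYX (xs m) (ys m))
        * dmc_prob PZX (xs w) zs * (if g ys zs \<noteq> w then 1 else 0)) =
     (\<Sum>ys\<in>DB n M. \<Sum>zs\<in>seqs n. K M w ys zs * (if g ys zs \<noteq> w then 1 else 0))"
    if w: "w < M" for w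
  proof -
    let ?E = "\<lambda>xs ys zs. (\<Prod>m<M. iid_prob PX (xs m) * dmc_prob PYX (xs m) (ys m))
        * dmc_prob PZX (xs w) zs * (if g ys zs \<noteq> w then 1 else 0::real)"
    have "(\<Sum>xs\<in>DB n M. \<Sum>ys\<in>DB n M. \<Sum>zs\<in>seqs n. ?E xs ys zs) =
          (\<Sum>ys\<in>DB n M. \<Sum>xs\<in>DB n M. \<Sum>zs\<in>seqs n. ?E xs ys zs)"
      by (rule sum.swap)
    also have "\<dots> = (\<Sum>ys\<in>DB n M. \<Sum>zs\<in>seqs n. \<Sum>xs\<in>DB n M. ?E xs ys zs)"
      by (intro sum.cong refl sum.swap)
    also have "\<dots> = (\<Sum>ys\<in>DB n M. \<Sum>zs\<in>seqs n. K M w ys zs * (if g ys zs \<noteq> w then 1 else 0))"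
    proof (intro sum.cong refl)
      fix ys :: "nat \<Rightarrow> 'y list" and zs :: "'z list"
      assume ys: "ys \<in> DB n M" and zs: "zs \<in> seqs n"
      define h where "h m x = iid_prob PX x * dmc_prob PYX x (ys m) *
          (if m = w then dmc_prob PZX x zs else 1)" for m x
      have 1: "(\<Prod>m<M. iid_prob PX (xs m) * dmc_prob PYX (xs m) (ys m)) * dmc_prob PZX (xs w) zs
            = (\<Prod>m<M. h m (xs m))" for xs
        unfolding h_def prod.distrib using w by (simp add: prod.delta)
      have 2: "(\<Sum>x\<in>seqs n. h m x) = (if m = w then Jn (ys w) zs else PYn (ys m))" if "m < M" for m
        using ys zs that unfolding h_def DB_def
        by (auto simp: sum_xs_J sum_xs_PY PiE_iff)
      have "(\<Sum>xs\<in>DB n M. ?E xs ys zs) = (\<Sum>xs\<in>DB n M. \<Prod>m<M. h m (xs m)) * (if g ys zs \<noteq> w then 1 else 0)"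
        by (simp add: 1 sum_distrib_right)
      also have "(\<Sum>xs\<in>DB n M. \<Prod>m<M. h m (xs m)) = (\<Prod>m<M. \<Sum>x\<in>seqs n. h m x)"
        unfolding DB_def by (rule sum_PiE_prod) simp
      also have "\<dots> = (\<Prod>m<M. if m = w then Jn (ys w) zs else PYn (ys m))"
        by (intro prod.cong refl 2) simp
      also have "\<dots> = K M w ys zs"
        unfolding K_def using w by (subst prod.remove[of _ w]) (auto intro!: prod.cong)
      finally show "(\<Sum>xs\<in>DB n M. ?E xs ys zs) = K M w ys zs * (if g ys zs \<noteq> w then 1 else 0)" .
    qed
    finally show ?thesis unfolding DB_def .
  qed
  then show ?thesis unfolding err_prob_def by (simp add: DB_def)
qed

lemma T1:
  assumes w: "w < M"
  shows "(\<Sum>ys\<in>DB n M. \<Sum>zs\<in>seqs n. K M w ys zs * \<phi> (ys w) zs) = (\<Sum>y\<in>seqs n. \<Sum>zs\<in>seqs n. Jn y zs * \<phi> y zs)"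
proof -
  define h where "h m y = (if m = w then (\<Sum>zs\<in>seqs n. Jn y zs * \<phi> y zs) else PYn y)" for m y
  have "(\<Sum>zs\<in>seqs n. K M w ys zs * \<phi> (ys w) zs) = (\<Prod>m<M. h m (ys m))" for ys
  proof -
    have "(\<Prod>m<M. h m (ys m)) = h w (ys w) * (\<Prod>m\<in>{..<M}-{w}. h m (ys m))"
      using w by (subst prod.remove[of _ w]) auto
    also have "(\<Prod>m\<in>{..<M}-{w}. h m (ys m)) = (\<Prod>m\<in>{..<M}-{w}. PYn (ys m))"
      by (intro prod.cong) (auto simp: h_def)
    finally show ?thesis by (simp add: h_def K_def sum_distrib_left mult_ac)
  qed
  then have "(\<Sum>ys\<in>DB n M. \<Sum>zs\<in>seqs n. K M w ys zs * \<phi> (ys w) zs) = (\<Prod>m<M. \<Sum>y\<in>seqs n. h m y)"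
    unfolding DB_def by (simp add: sum_PiE_prod)
  also have "\<dots> = (\<Sum>y\<in>seqs n. h w y) * (\<Prod>m\<in>{..<M}-{w}. \<Sum>y\<in>seqs n. h m y)"
    using w by (subst prod.remove[of _ w]) auto
  also have "(\<Prod>m\<in>{..<M}-{w}. \<Sum>y\<in>seqs n. h m y) = 1"
    by (intro prod.neutral) (auto simp: h_def sum_PYn)
  finally show ?thesis by (simp add: h_def)
qed

lemma T2:
  assumes w: "w < M" and m: "m < M" "m \<noteq> w"
  shows "(\<Sum>ys\<in>DB n M. \<Sum>zs\<in>seqs n. K M w ys zs * \<phi> (ys m) zs) =
         (\<Sum>zs\<in>seqs n. PZn zs * (\<Sum>y\<in>seqs n. PYn y * \<phi> y zs))"
proof -
  have "(\<Sum>ys\<in>DB n M. \<Sum>zs\<in>seqs n. K M w ys zs * \<phi> (ys m) zs) =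
        (\<Sum>zs\<in>seqs n. \<Sum>ys\<in>DB n M. K M w ys zs * \<phi> (ys m) zs)"
    by (rule sum.swap)
  also have "\<dots> = (\<Sum>zs\<in>seqs n. PZn zs * (\<Sum>y\<in>seqs n. PYn y * \<phi> y zs))"
  proof (intro sum.cong refl)
    fix zs :: "'z list" assume zs: "zs \<in> seqs n"
    define h where "h m' y = (if m' = w then Jn y zs else if m' = m then PYn y * \<phi> y zs else PYn y)" for m' y
    have A: "{..<M} - {w} - {m} = {..<M} - {w, m}" by auto
    have "K M w ys zs * \<phi> (ys m) zs = (\<Prod>m'<M. h m' (ys m'))" for ys
    proof -
      have "(\<Prod>m'<M. h m' (ys m')) = h w (ys w) * (\<Prod>m'\<in>{..<M}-{w}. h m' (ys m'))"
        using w by (subst prod.remove[of _ w]) auto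
      also have "(\<Prod>m'\<in>{..<M}-{w}. h m' (ys m')) = h m (ys m) * (\<Prod>m'\<in>{..<M}-{w}-{m}. h m' (ys m'))"
        using m by (subst prod.remove[of _ m]) auto
      also have "(\<Prod>m'\<in>{..<M}-{w}-{m}. h m' (ys m')) = (\<Prod>m'\<in>{..<M}-{w}-{m}. PYn (ys m'))"
        by (intro prod.cong) (auto simp: h_def)
      also have "(\<Prod>m'\<in>{..<M}-{w}. PYn (ys m')) = PYn (ys m) * (\<Prod>m'\<in>{..<M}-{w}-{m}. PYn (ys m'))"
        using m by (subst prod.remove[of _ m]) auto
      ultimately show ?thesis using m by (simp add: h_def K_def mult_ac)
    qed
    then have "(\<Sum>ys\<in>DB n M. K M w ys zs * \<phi> (ys m) zs) = (\<Prod>m'<M. \<Sum>y\<in>seqs n. h m' y)"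
      unfolding DB_def by (simp add: sum_PiE_prod)
    also have "\<dots> = (\<Sum>y\<in>seqs n. h w y) * ((\<Sum>y\<in>seqs n. h m y) * (\<Prod>m'\<in>{..<M}-{w}-{m}. \<Sum>y\<in>seqs n. h m' y))"
      using w m by (subst prod.remove[of _ w], simp, simp, subst prod.remove[of _ m]) auto
    also have "(\<Prod>m'\<in>{..<M}-{w}-{m}. \<Sum>y\<in>seqs n. h m' y) = 1"
      by (intro prod.neutral) (auto simp: h_def sum_PYn)
    finally show "(\<Sum>ys\<in>DB n M. K M w ys zs * \<phi> (ys m) zs) = PZn zs * (\<Sum>y\<in>seqs n. PYn y * \<phi> y zs)"
      using zs m by (simp add: h_def sum_Jn_ys)
  qed
  finally show ?thesis .
qed

lemma sum_K: "w < M \<Longrightarrow> (\<Sum>ys\<in>DB n M. \<Sum>zs\<in>seqs n. K M w ys zs) = 1"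
  using T1[where \<phi>="\<lambda>_ _. 1" and n=n and w=w and M=M] by (simp add: sum_Jn)

lemma Fn_compl: "(\<Sum>ys\<in>seqs n. \<Sum>zs\<in>seqs n. Jn ys zs * (if infn ys zs > t then 1 else 0)) = 1 - Fn n t"
proof -
  have "(\<Sum>ys\<in>seqs n. \<Sum>zs\<in>seqs n. Jn ys zs * (if infn ys zs > t then 1 else 0)) + Fn n t =
        (\<Sum>ys\<in>seqs n. \<Sum>zs\<in>seqs n. Jn ys zs)"
    unfolding Fn_def sum.distrib[symmetric] by (intro sum.cong refl) (auto simp: algebra_simps)
  then show ?thesis using sum_Jn[of n] by simp
qed

lemma sum_prod_PYn: "(\<Sum>ys\<in>DB n M. \<Prod>m<M. PYn (ys m)) = 1"
  unfolding DB_def using sum_PiE_prod[where h="\<lambda>m y. PYn y" and S="seqs n" and M=M]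
  by (simp add: sum_PYn)

end


context bio begin

lemma Jn_le: assumes "length y = length zs" "infn y zs \<le> t"
  shows "Jn y zs \<le> exp t * (PYn y * PZn zs)"
proof (cases "Jn y zs > 0")
  case True
  then have "Jn y zs = exp (infn y zs) * (PYn y * PZn zs)" using Jn_pos assms(1) by blast
  also have "\<dots> \<le> exp t * (PYn y * PZn zs)"
    using assms(2) by (intro mult_right_mono) auto
  finally show ?thesis .
next
  case False
  then have "Jn y zs = 0" using Jn_nonneg[of y zs] by linarith
  then show ?thesis by simp
qed

lemma converse:
  assumes M: "M \<ge> 1"
  shows "1 - err_prob PX PYX PZX n M g \<le> (1 - Fn n (ln (real M) - \<gamma>)) + exp (- \<gamma>)"
proof -
  define t where "t = ln (real M) - \<gamma>"
  have et: "exp t = real M * exp (- \<gamma>)" using M unfolding t_def by (simp add: exp_diff exp_minus field_simps)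
  define ind where "ind ys zs w = (if g ys zs = w then 1 else 0::real)" for ys zs w
  define S where "S = (\<Sum>w<M. \<Sum>ys\<in>DB n M. \<Sum>zs\<in>seqs n. K M w ys zs * ind ys zs w)"
  have "err_prob PX PYX PZX n M g * real M =
      (\<Sum>w<M. \<Sum>ys\<in>DB n M. \<Sum>zs\<in>seqs n. K M w ys zs * (if g ys zs \<noteq> w then 1 else 0))"
    using M by (simp add: err_red)
  also have "\<dots> = (\<Sum>w<M. \<Sum>ys\<in>DB n M. \<Sum>zs\<in>seqs n. K M w ys zs - K M w ys zs * ind ys zs w)"
    by (intro sum.cong refl) (auto simp: ind_def)
  also have "\<dots> = (\<Sum>w<M. (\<Sum>ys\<in>DB n M. \<Sum>zs\<in>seqs n. K M w ys zs)) - S"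
    unfolding S_def by (simp add: sum_subtractf)
  also have "\<dots> = real M - S" by (simp add: sum_K)
  finally have err: "err_prob PX PYX PZX n M g = 1 - S / real M"
    using M by (simp add: field_simps)
  define C where "C = real M * exp (- \<gamma>)"
  have pt: "K M w ys zs * ind ys zs w \<le> K M w ys zs * (if infn (ys w) zs > t then 1 else 0)
            + C * ((\<Prod>m<M. PYn (ys m)) * PZn zs * ind ys zs w)"
    if w: "w < M" and ys: "ys \<in> DB n M" and zs: "zs \<in> seqs n" for w ys zs
  proof (cases "infn (ys w) zs > t")
    case True
    have "K M w ys zs * ind ys zs w \<le> K M w ys zs"
      by (intro mult_left_le) (auto simp: ind_def)
    moreover have "0 \<le> C * ((\<Prod>m<M. PYn (ys m)) * PZn zs * ind ys zs w)"
      unfolding C_def ind_def by (intro mult_nonneg_nonneg prod_nonneg) auto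
    ultimately show ?thesis using True by simp
  next
    case False
    have l: "length (ys w) = length zs" using ys zs w by (auto simp: DB_def PiE_iff)
    have pr: "(\<Prod>m<M. PYn (ys m)) = PYn (ys w) * (\<Prod>m\<in>{..<M}-{w}. PYn (ys m))"
      using w by (subst prod.remove[of _ w]) auto
    have "K M w ys zs \<le> (\<Prod>m\<in>{..<M}-{w}. PYn (ys m)) * (exp t * (PYn (ys w) * PZn zs))"
      unfolding K_def using Jn_le[OF l, of t] False
      by (intro mult_left_mono prod_nonneg) auto
    also have "\<dots> = C * ((\<Prod>m<M. PYn (ys m)) * PZn zs)"
      unfolding pr et C_def by (simp add: mult_ac)
    finally have "K M w ys zs * ind ys zs w \<le> C * ((\<Prod>m<M. PYn (ys m)) * PZn zs) * ind ys zs w"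
      by (intro mult_right_mono) (auto simp: ind_def)
    then show ?thesis using False by (simp add: mult_ac)
  qed
  have "S \<le> (\<Sum>w<M. \<Sum>ys\<in>DB n M. \<Sum>zs\<in>seqs n. K M w ys zs * (if infn (ys w) zs > t then 1 else 0)
            + C * ((\<Prod>m<M. PYn (ys m)) * PZn zs * ind ys zs w))"
    unfolding S_def by (intro sum_mono pt) auto
  also have "\<dots> = (\<Sum>w<M. \<Sum>ys\<in>DB n M. \<Sum>zs\<in>seqs n. K M w ys zs * (if infn (ys w) zs > t then 1 else 0))
      + C * (\<Sum>w<M. \<Sum>ys\<in>DB n M. \<Sum>zs\<in>seqs n. (\<Prod>m<M. PYn (ys m)) * PZn zs * ind ys zs w)"
    by (simp add: sum.distrib sum_distrib_left)
  also have "(\<Sum>w<M. \<Sum>ys\<in>DB n M. \<Sum>zs\<in>seqs n. K M w ys zs * (if infn (ys w) zs > t then 1 else 0))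
       = (\<Sum>w<M. 1 - Fn n t)"
    by (intro sum.cong refl) (simp add: T1[where \<phi>="\<lambda>y zs. if infn y zs > t then 1 else 0"] Fn_compl)
  also have "(\<Sum>w<M. \<Sum>ys\<in>DB n M. \<Sum>zs\<in>seqs n. (\<Prod>m<M. PYn (ys m)) * PZn zs * ind ys zs w)
      = (\<Sum>ys\<in>DB n M. \<Sum>zs\<in>seqs n. (\<Prod>m<M. PYn (ys m)) * PZn zs * (\<Sum>w<M. ind ys zs w))"
    by (subst sum.swap, subst sum.swap) (simp add: sum_distrib_left)
  also have "\<dots> \<le> (\<Sum>ys\<in>DB n M. \<Sum>zs\<in>seqs n. (\<Prod>m<M. PYn (ys m)) * PZn zs)"
  proof (intro sum_mono)
    fix ys zs
    have "(\<Sum>w<M. ind ys zs w) \<le> 1"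
      unfolding ind_def by (simp add: sum.delta')
    then show "(\<Prod>m<M. PYn (ys m)) * PZn zs * (\<Sum>w<M. ind ys zs w) \<le> (\<Prod>m<M. PYn (ys m)) * PZn zs"
      by (intro mult_left_le mult_nonneg_nonneg prod_nonneg) (auto simp: ind_def intro: sum_nonneg)
  qed
  also have "\<dots> = 1"
    by (simp add: sum_distrib_left[symmetric] sum_PZn sum_prod_PYn sum_distrib_right[symmetric])
  finally have "S \<le> real M * (1 - Fn n t) + C"
    using exp_gt_zero[of "-\<gamma>"] M unfolding C_def by (simp add: mult_left_mono)
  then have "S / real M \<le> (1 - Fn n t) + exp (- \<gamma>)"
    using M unfolding C_def by (simp add: field_simps)
  then show ?thesis unfolding err t_def by simp
qed

end


context bio begin

lemma achievability:
  assumes M: "M \<ge> 1"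
  shows "\<exists>g. err_prob PX PYX PZX n M g \<le> Fn n (ln (real M) + \<gamma>) + exp (- \<gamma>)"
proof -
  define t where "t = ln (real M) + \<gamma>"
  have et0: "exp t = real M * exp \<gamma>" using M unfolding t_def by (simp add: exp_add)
  have et: "real M * exp (- t) = exp (- \<gamma>)" using M unfolding exp_minus et0
    by (simp add: field_simps)
  define cnd where "cnd ys zs m \<longleftrightarrow> Jn (ys m) zs > exp t * (PYn (ys m) * PZn zs)"
    for ys :: "nat \<Rightarrow> 'y list" and zs m
  define g where "g ys zs = (LEAST m. m < M \<and> cnd ys zs m)" for ys zs
  define nc where "nc ys zs m = (if cnd ys zs m then 0 else 1::real)" for ys zs m
  define cc where "cc ys zs m = (if cnd ys zs m then 1 else 0::real)" for ys zs m
  have ind: "(if g ys zs \<noteq> w then 1 else 0) \<le> nc ys zs w + (\<Sum>m\<in>{..<M}-{w}. cc ys zs m)"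
    if w: "w < M" for ys zs w
  proof (cases "cnd ys zs w")
    case False
    have "0 \<le> (\<Sum>m\<in>{..<M}-{w}. cc ys zs m)" by (intro sum_nonneg) (simp add: cc_def)
    then show ?thesis using False by (simp add: nc_def)
  next
    case True
    show ?thesis
    proof (cases "\<exists>m\<in>{..<M}-{w}. cnd ys zs m")
      case True
      then obtain m where m: "m \<in> {..<M}-{w}" "cnd ys zs m" by blast
      have "1 = cc ys zs m" using m by (simp add: cc_def)
      also have "\<dots> \<le> (\<Sum>m\<in>{..<M}-{w}. cc ys zs m)"
        by (rule member_le_sum) (use m in \<open>auto simp: cc_def\<close>)
      finally show ?thesis by (auto simp: nc_def)
    next
      case False
      have "g ys zs = w" unfolding g_def
        by (rule Least_equality) (use w \<open>cnd ys zs w\<close> False in auto)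
      moreover have "0 \<le> (\<Sum>m\<in>{..<M}-{w}. cc ys zs m)" by (intro sum_nonneg) (simp add: cc_def)
      ultimately show ?thesis by (simp add: nc_def)
    qed
  qed
  have A: "(\<Sum>ys\<in>DB n M. \<Sum>zs\<in>seqs n. K M w ys zs * nc ys zs w) \<le> Fn n t" if w: "w < M" for w
  proof -
    have "(\<Sum>ys\<in>DB n M. \<Sum>zs\<in>seqs n. K M w ys zs * nc ys zs w) =
        (\<Sum>y\<in>seqs n. \<Sum>zs\<in>seqs n. Jn y zs * (if Jn y zs > exp t * (PYn y * PZn zs) then 0 else 1))"
      using T1[OF w, where \<phi>="\<lambda>y zs. if Jn y zs > exp t * (PYn y * PZn zs) then 0 else 1" and n=n]
      by (simp add: nc_def cnd_def)
    also have "\<dots> \<le> Fn n t" unfolding Fn_def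
    proof (intro sum_mono)
      fix y :: "'y list" and zs :: "'z list" assume y: "y \<in> seqs n" and zs: "zs \<in> seqs n"
      show "Jn y zs * (if Jn y zs > exp t * (PYn y * PZn zs) then 0 else 1) \<le>
            Jn y zs * (if infn y zs \<le> t then 1 else 0)"
      proof (cases "Jn y zs > 0")
        case True
        have e: "Jn y zs = exp (infn y zs) * (PYn y * PZn zs)" using Jn_pos True y zs by simp
        then have pp: "PYn y * PZn zs > 0" using True
          by (metis exp_gt_zero mult_eq_0_iff mult_nonneg_nonneg PYn_nonneg PZn_nonneg order_less_le)
        have "\<not> Jn y zs > exp t * (PYn y * PZn zs) \<Longrightarrow> infn y zs \<le> t"
          using pp unfolding e by (simp add: mult_less_cancel_right_pos not_less)
        then show ?thesis by auto
      next
        case False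
        then have "Jn y zs = 0" using Jn_nonneg[of y zs] by linarith
        then show ?thesis by simp
      qed
    qed
    finally show ?thesis .
  qed
  have B: "(\<Sum>ys\<in>DB n M. \<Sum>zs\<in>seqs n. K M w ys zs * cc ys zs m) \<le> exp (- t)"
    if w: "w < M" and m: "m < M" "m \<noteq> w" for w m
  proof -
    have "(\<Sum>ys\<in>DB n M. \<Sum>zs\<in>seqs n. K M w ys zs * cc ys zs m) =
        (\<Sum>zs\<in>seqs n. PZn zs * (\<Sum>y\<in>seqs n. PYn y * (if Jn y zs > exp t * (PYn y * PZn zs) then 1 else 0)))"
      using T2[OF w m, where \<phi>="\<lambda>y zs. if Jn y zs > exp t * (PYn y * PZn zs) then 1 else 0" and n=n]
      by (simp add: cc_def cnd_def)
    also have "\<dots> = (\<Sum>zs\<in>seqs n. \<Sum>y\<in>seqs n. PZn zs * PYn y * (if Jn y zs > exp t * (PYn y * PZn zs) then 1 else 0))"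
      by (simp add: sum_distrib_left mult_ac)
    also have "\<dots> \<le> (\<Sum>zs\<in>seqs n. \<Sum>y\<in>seqs n. exp (- t) * Jn y zs)"
    proof (intro sum_mono)
      fix zs :: "'z list" and y :: "'y list"
      show "PZn zs * PYn y * (if Jn y zs > exp t * (PYn y * PZn zs) then 1 else 0) \<le> exp (- t) * Jn y zs"
      proof (cases "Jn y zs > exp t * (PYn y * PZn zs)")
        case True
        then have "exp (-t) * (exp t * (PYn y * PZn zs)) \<le> exp (-t) * Jn y zs" by simp
        then show ?thesis using True by (simp add: exp_minus field_simps)
      qed simp
    qed
    also have "\<dots> = exp (- t)"
      by (subst sum.swap) (simp add: sum_distrib_left[symmetric] sum_Jn)
    finally show ?thesis .
  qed
  have "err_prob PX PYX PZX n M g * real M =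
      (\<Sum>w<M. \<Sum>ys\<in>DB n M. \<Sum>zs\<in>seqs n. K M w ys zs * (if g ys zs \<noteq> w then 1 else 0))"
    using M by (simp add: err_red)
  also have "\<dots> \<le> (\<Sum>w<M. \<Sum>ys\<in>DB n M. \<Sum>zs\<in>seqs n. K M w ys zs * nc ys zs w
                   + (\<Sum>m\<in>{..<M}-{w}. K M w ys zs * cc ys zs m))"
  proof (intro sum_mono)
    fix w ys zs assume w: "w \<in> {..<M}"
    have "K M w ys zs * (if g ys zs \<noteq> w then 1 else 0) \<le> K M w ys zs * (nc ys zs w + (\<Sum>m\<in>{..<M}-{w}. cc ys zs m))"
      by (intro mult_left_mono ind) (use w in auto)
    then show "K M w ys zs * (if g ys zs \<noteq> w then 1 else 0) \<le> K M w ys zs * nc ys zs w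
                   + (\<Sum>m\<in>{..<M}-{w}. K M w ys zs * cc ys zs m)"
      by (simp add: sum_distrib_left distrib_left)
  qed
  also have "\<dots> = (\<Sum>w<M. (\<Sum>ys\<in>DB n M. \<Sum>zs\<in>seqs n. K M w ys zs * nc ys zs w)
           + (\<Sum>m\<in>{..<M}-{w}. \<Sum>ys\<in>DB n M. \<Sum>zs\<in>seqs n. K M w ys zs * cc ys zs m))"
  proof (intro sum.cong refl)
    fix w
    show "(\<Sum>ys\<in>DB n M. \<Sum>zs\<in>seqs n. K M w ys zs * nc ys zs w + (\<Sum>m\<in>{..<M}-{w}. K M w ys zs * cc ys zs m)) =
      (\<Sum>ys\<in>DB n M. \<Sum>zs\<in>seqs n. K M w ys zs * nc ys zs w)
           + (\<Sum>m\<in>{..<M}-{w}. \<Sum>ys\<in>DB n M. \<Sum>zs\<in>seqs n. K M w ys zs * cc ys zs m)"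
    proof -
      have "(\<Sum>ys\<in>DB n M. \<Sum>zs\<in>seqs n. \<Sum>m\<in>{..<M}-{w}. K M w ys zs * cc ys zs m) =
            (\<Sum>ys\<in>DB n M. \<Sum>m\<in>{..<M}-{w}. \<Sum>zs\<in>seqs n. K M w ys zs * cc ys zs m)"
        by (rule sum.cong[OF refl], rule sum.swap)
      also have "\<dots> = (\<Sum>m\<in>{..<M}-{w}. \<Sum>ys\<in>DB n M. \<Sum>zs\<in>seqs n. K M w ys zs * cc ys zs m)"
        by (rule sum.swap)
      finally show ?thesis by (simp only: sum.distrib)
    qed
  qed
  also have "\<dots> \<le> (\<Sum>w<M. Fn n t + (\<Sum>m\<in>{..<M}-{w}. exp (- t)))"
    by (intro sum_mono add_mono A B) auto
  also have "\<dots> \<le> (\<Sum>w<M. Fn n t + real M * exp (- t))"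
  proof (intro sum_mono add_left_mono)
    fix w
    have "(\<Sum>m\<in>{..<M}-{w}. exp (- t)) = real (card ({..<M}-{w})) * exp (- t)" by simp
    also have "\<dots> \<le> real M * exp (- t)"
      by (intro mult_right_mono) (auto simp: card_Diff_singleton_if)
    finally show "(\<Sum>m\<in>{..<M}-{w}. exp (- t)) \<le> real M * exp (- t)" .
  qed
  also have "\<dots> = real M * (Fn n t + exp (- \<gamma>))" using et by simp
  finally have "err_prob PX PYX PZX n M g \<le> Fn n t + exp (- \<gamma>)"
    using M by (simp add: mult.commute)
  then show ?thesis unfolding t_def by blast
qed

end


lemma prod_list_map2_nth: "length ys = length zs \<Longrightarrow>
    prod_list (map2 F ys zs) = (\<Prod>k<length ys. F (ys!k) (zs!k))"
  by (induction ys zs rule: list_induct2) (simp_all del: prod.lessThan_Suc add: prod.lessThan_Suc_shift)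

lemma sum_list_map2_nth: "length ys = length zs \<Longrightarrow>
    sum_list (map2 F ys zs) = (\<Sum>k<length ys. F (ys!k) (zs!k))"
  by (induction ys zs rule: list_induct2) (simp_all del: sum.lessThan_Suc add: sum.lessThan_Suc_shift)

lemma sum_pairs: "(\<Sum>p\<in>(UNIV::('a::finite \<times> 'b::finite) set). f (fst p) (snd p)) = (\<Sum>y\<in>UNIV. \<Sum>z\<in>UNIV. f y z)"
proof -
  have "(UNIV::('a \<times> 'b) set) = UNIV \<times> UNIV" by simp
  then show ?thesis by (simp add: sum.cartesian_product case_prod_beta)
qed

context bio begin

definition Q :: "('y \<times> 'z) pmf" where "Q = embed_pmf (\<lambda>p. pyz (fst p) (snd p))"

lemma pmf_Q: "pmf Q p = pyz (fst p) (snd p)"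
  unfolding Q_def
proof (rule pmf_embed_pmf)
  show "\<And>x. 0 \<le> pyz (fst x) (snd x)" by simp
  have "(\<integral>\<^sup>+x. ennreal (pyz (fst x) (snd x)) \<partial>count_space UNIV) = (\<Sum>x\<in>UNIV. ennreal (pyz (fst x) (snd x)))"
    by (rule nn_integral_count_space_finite) simp
  also have "\<dots> = ennreal (\<Sum>x\<in>UNIV. pyz (fst x) (snd x))"
    by (rule sum_ennreal) simp
  also have "(\<Sum>x\<in>UNIV. pyz (fst x) (snd x)) = 1" by (simp add: sum_pairs sum_pyz)
  finally show "(\<integral>\<^sup>+x. ennreal (pyz (fst x) (snd x)) \<partial>count_space UNIV) = 1" by simp
qed

definition Om :: "(nat \<Rightarrow> 'y \<times> 'z) measure" where "Om = PiM UNIV (\<lambda>_. measure_pmf Q)"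

lemma prob_Om: "prob_space Om"
  unfolding Om_def by (rule prob_space_PiM) (rule prob_space_measure_pmf)

definition idp :: "'y \<times> 'z \<Rightarrow> real" where "idp p = idn (fst p) (snd p)"

lemma finite_sets_PiM:
  assumes "finite J" "finite A" "A \<subseteq> PiE J (\<lambda>_. UNIV)"
  shows "A \<in> sets (PiM J (\<lambda>_. measure_pmf Q))"
proof -
  have *: "PiE J (\<lambda>i. {f i}) = {f}" if "f \<in> A" for f
    using that assms(3) by (intro PiE_singleton) (auto simp: PiE_iff)
  have "A = (\<Union>f\<in>A. {f})" by simp
  also have "\<dots> = (\<Union>f\<in>A. PiE J (\<lambda>i. {f i}))" by (intro SUP_cong refl) (simp add: *)
  also have "\<dots> \<in> sets (PiM J (\<lambda>_. measure_pmf Q))"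
    using assms by (intro sets.finite_UN sets_PiM_I_finite) auto
  finally show ?thesis .
qed

lemma measure_PiM_finite:
  fixes J :: "nat set"
  assumes "finite J" "A \<subseteq> PiE J (\<lambda>_. UNIV)"
  shows "measure (PiM J (\<lambda>_. measure_pmf Q)) A = (\<Sum>f\<in>A. \<Prod>i\<in>J. pmf Q (f i))"
proof -
  interpret PP: product_prob_space "\<lambda>_::nat. measure_pmf Q" "UNIV"
    by (rule product_prob_spaceI) (rule prob_space_measure_pmf)
  interpret PJ: prob_space "PiM J (\<lambda>_. measure_pmf Q)"
    by (rule prob_space_PiM) (rule prob_space_measure_pmf)
  have finA: "finite A"
    by (rule finite_subset[OF assms(2)]) (auto intro!: finite_PiE assms)
  have "measure (PiM J (\<lambda>_. measure_pmf Q)) A = (\<Sum>f\<in>A. measure (PiM J (\<lambda>_. measure_pmf Q)) {f})"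
  proof (rule measure_eq_sum_singleton[OF finA])
    fix f assume f: "f \<in> A"
    show "{f} \<in> sets (PiM J (\<lambda>_. measure_pmf Q))"
      using f assms by (intro finite_sets_PiM) auto
    show "emeasure (PiM J (\<lambda>_. measure_pmf Q)) {f} \<noteq> \<infinity>"
      using PJ.emeasure_finite by simp
  qed
  also have "\<dots> = (\<Sum>f\<in>A. \<Prod>i\<in>J. pmf Q (f i))"
  proof (intro sum.cong refl)
    fix f assume f: "f \<in> A"
    have "{f} = PiE J (\<lambda>i. {f i})" using f assms(2) by (intro PiE_singleton[symmetric]) (auto simp: PiE_iff)
    then have "emeasure (PiM J (\<lambda>_. measure_pmf Q)) {f} = (\<Prod>i\<in>J. emeasure (measure_pmf Q) {f i})"
      using assms(1) by (simp add: PP.emeasure_PiM)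
    also have "\<dots> = ennreal (\<Prod>i\<in>J. pmf Q (f i))"
      by (simp add: emeasure_pmf_single prod_ennreal)
    finally show "measure (PiM J (\<lambda>_. measure_pmf Q)) {f} = (\<Prod>i\<in>J. pmf Q (f i))"
      by (simp add: measure_def prod_nonneg)
  qed
  finally show ?thesis .
qed

end


context bio begin

lemma Fn_measure: "Fn n t = measure Om {\<omega> \<in> space Om. (\<Sum>i<n. idp (\<omega> i)) \<le> t}"
proof -
  interpret PP: product_prob_space "\<lambda>_::nat. measure_pmf Q" "UNIV"
    by (rule product_prob_spaceI) (rule prob_space_measure_pmf)
  define J where "J = {..<n}"
  define A where "A = {f \<in> PiE J (\<lambda>_. UNIV). (\<Sum>i<n. idp (f i)) \<le> t}"
  have finPi: "finite (PiE J (\<lambda>_. UNIV::('y\<times>'z) set))" unfolding J_def by (intro finite_PiE) auto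
  have sA: "A \<in> sets (PiM J (\<lambda>_. measure_pmf Q))"
    by (rule finite_sets_PiM) (use finPi in \<open>auto simp: A_def J_def\<close>)
  have meas: "(\<lambda>x. restrict x J) \<in> measurable Om (PiM J (\<lambda>_. measure_pmf Q))"
    unfolding Om_def by (rule measurable_restrict_subset) simp
  have "measure (PiM J (\<lambda>_. measure_pmf Q)) A = measure (distr Om (PiM J (\<lambda>_. measure_pmf Q)) (\<lambda>x. restrict x J)) A"
    using PP.distr_PiM_restrict_finite[of J] unfolding Om_def J_def by simp
  also have "\<dots> = measure Om ((\<lambda>x. restrict x J) -` A \<inter> space Om)"
    by (rule measure_distr[OF meas sA])
  also have "(\<lambda>x. restrict x J) -` A \<inter> space Om = {\<omega> \<in> space Om. (\<Sum>i<n. idp (\<omega> i)) \<le> t}"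
  proof -
    have "(\<Sum>i<n. idp (restrict \<omega> J i)) = (\<Sum>i<n. idp (\<omega> i))" for \<omega>
      by (intro sum.cong) (auto simp: J_def)
    then show ?thesis by (auto simp: A_def)
  qed
  finally have m1: "measure Om {\<omega> \<in> space Om. (\<Sum>i<n. idp (\<omega> i)) \<le> t} = (\<Sum>f\<in>A. \<Prod>i\<in>J. pmf Q (f i))"
    using measure_PiM_finite[of J A] unfolding A_def J_def by auto
  have "Fn n t = (\<Sum>p\<in>seqs n \<times> seqs n. Jn (fst p) (snd p) * (if infn (fst p) (snd p) \<le> t then 1 else 0))"
    unfolding Fn_def by (simp add: sum.cartesian_product case_prod_beta)
  also have "\<dots> = (\<Sum>f\<in>PiE J (\<lambda>_. UNIV). if (\<Sum>i<n. idp (f i)) \<le> t then (\<Prod>i\<in>J. pmf Q (f i)) else 0)"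
  proof (rule sum.reindex_bij_witness[where j="\<lambda>p. (\<lambda>k\<in>J. (fst p ! k, snd p ! k))"
        and i="\<lambda>f. (map (\<lambda>k. fst (f k)) [0..<n], map (\<lambda>k. snd (f k)) [0..<n])"])
    fix p :: "'y list \<times> 'z list" assume p: "p \<in> seqs n \<times> seqs n"
    then have l: "length (fst p) = n" "length (snd p) = n" by auto
    show "(map (\<lambda>k. fst ((\<lambda>k\<in>J. (fst p ! k, snd p ! k)) k)) [0..<n],
           map (\<lambda>k. snd ((\<lambda>k\<in>J. (fst p ! k, snd p ! k)) k)) [0..<n]) = p"
    proof -
      have a: "map (\<lambda>k. fst ((\<lambda>k\<in>J. (fst p ! k, snd p ! k)) k)) [0..<n] = map (\<lambda>k. fst p ! k) [0..<n]"
        by (intro map_cong) (auto simp: J_def)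
      have b: "map (\<lambda>k. snd ((\<lambda>k\<in>J. (fst p ! k, snd p ! k)) k)) [0..<n] = map (\<lambda>k. snd p ! k) [0..<n]"
        by (intro map_cong) (auto simp: J_def)
      have c: "map (\<lambda>k. fst p ! k) [0..<n] = fst p" using map_nth[of "fst p"] l(1) by simp
      have d: "map (\<lambda>k. snd p ! k) [0..<n] = snd p" using map_nth[of "snd p"] l(2) by simp
      show ?thesis unfolding a b c d by simp
    qed
    show "(\<lambda>k\<in>J. (fst p ! k, snd p ! k)) \<in> PiE J (\<lambda>_. UNIV)" by simp
    have j1: "(\<Sum>i<n. idp ((\<lambda>k\<in>J. (fst p ! k, snd p ! k)) i)) = infn (fst p) (snd p)"
      unfolding infn_def using l by (simp add: sum_list_map2_nth J_def idp_def)
    have j2: "(\<Prod>i\<in>J. pmf Q ((\<lambda>k\<in>J. (fst p ! k, snd p ! k)) i)) = Jn (fst p) (snd p)"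
      unfolding Jn_def using l by (simp add: prod_list_map2_nth J_def pmf_Q)
    show "(if (\<Sum>i<n. idp ((\<lambda>k\<in>J. (fst p ! k, snd p ! k)) i)) \<le> t
           then \<Prod>i\<in>J. pmf Q ((\<lambda>k\<in>J. (fst p ! k, snd p ! k)) i) else 0) =
          Jn (fst p) (snd p) * (if infn (fst p) (snd p) \<le> t then 1 else 0)"
      unfolding j1 j2 by simp
  next
    fix f :: "nat \<Rightarrow> 'y \<times> 'z" assume f: "f \<in> PiE J (\<lambda>_. UNIV)"
    show "(map (\<lambda>k. fst (f k)) [0..<n], map (\<lambda>k. snd (f k)) [0..<n]) \<in> seqs n \<times> seqs n" by simp
    show "(\<lambda>k\<in>J. (fst (map (\<lambda>k. fst (f k)) [0..<n], map (\<lambda>k. snd (f k)) [0..<n]) ! k,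
                  snd (map (\<lambda>k. fst (f k)) [0..<n], map (\<lambda>k. snd (f k)) [0..<n]) ! k)) = f"
    proof (rule ext)
      fix k show "(\<lambda>k\<in>J. (fst (map (\<lambda>k. fst (f k)) [0..<n], map (\<lambda>k. snd (f k)) [0..<n]) ! k,
                  snd (map (\<lambda>k. fst (f k)) [0..<n], map (\<lambda>k. snd (f k)) [0..<n]) ! k)) k = f k"
        using f by (cases "k \<in> J") (auto simp: J_def PiE_iff extensional_def)
    qed
  qed
  also have "\<dots> = (\<Sum>f\<in>A. \<Prod>i\<in>J. pmf Q (f i))"
    unfolding A_def by (rule sum.inter_filter[symmetric, OF finPi])
  finally show ?thesis using m1 by simp
qed

end


context bio begin

lemma clt_Fn:
  assumes V: "DV > 0"
  shows "(\<lambda>n. Fn n (real n * MI + a * sqrt (real n * DV))) \<longlonglongrightarrow> Phi a"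
proof -
  interpret O: prob_space Om by (rule prob_Om)
  define h where "h p = idp p - MI" for p
  define X where "X i \<omega> = h (\<omega> i)" for i :: nat and \<omega> :: "nat \<Rightarrow> 'y \<times> 'z"
  have comp_meas: "(\<lambda>\<omega>. \<omega> i) \<in> measurable Om (measure_pmf Q)" for i
    unfolding Om_def by (rule measurable_component_singleton) simp
  have h_meas: "h \<in> borel_measurable (measure_pmf Q)" by simp
  have h2_meas: "(\<lambda>p. (h p)\<^sup>2) \<in> borel_measurable (measure_pmf Q)" by simp
  have X_meas: "X i \<in> borel_measurable Om" for i
    unfolding X_def using measurable_compose[OF comp_meas h_meas] .
  have dcomp: "distr Om (measure_pmf Q) (\<lambda>\<omega>. \<omega> i) = measure_pmf Q" for i
    unfolding Om_def by (rule distr_PiM_component) (auto intro: prob_space_measure_pmf)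
  have coord: "O.indep_vars (\<lambda>_. measure_pmf Q) (\<lambda>i \<omega>. \<omega> i) UNIV"
  proof (subst O.indep_vars_iff_distr_eq_PiM')
    show "UNIV \<noteq> {}" by simp
    show "\<And>i. i \<in> UNIV \<Longrightarrow> (\<lambda>\<omega>. \<omega> i) \<in> measurable Om (measure_pmf Q)" using comp_meas by simp
    have "(\<lambda>x::nat \<Rightarrow> 'y \<times> 'z. \<lambda>i\<in>UNIV. x i) = (\<lambda>x. x)" by (simp add: restrict_def)
    then show "distr Om (Pi\<^sub>M UNIV (\<lambda>i. measure_pmf Q)) (\<lambda>x. \<lambda>i\<in>UNIV. x i) =
               Pi\<^sub>M UNIV (\<lambda>i. distr Om (measure_pmf Q) (\<lambda>\<omega>. \<omega> i))"
      unfolding dcomp by (simp add: Om_def)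
  qed
  have indepX: "O.indep_vars (\<lambda>i. borel) X UNIV"
    unfolding X_def by (rule O.indep_vars_compose2[OF coord]) simp
  have intQ: "integral\<^sup>L (measure_pmf Q) f = (\<Sum>y\<in>UNIV. \<Sum>z\<in>UNIV. pyz y z * f (y, z))" for f :: "'y \<times> 'z \<Rightarrow> real"
  proof -
    have "integral\<^sup>L (measure_pmf Q) f = (\<Sum>p\<in>UNIV. pmf Q p *\<^sub>R f p)"
      by (rule integral_measure_pmf) auto
    also have "\<dots> = (\<Sum>p\<in>UNIV. pyz (fst p) (snd p) * f (fst p, snd p))" by (simp add: pmf_Q)
    also have "\<dots> = (\<Sum>y\<in>UNIV. \<Sum>z\<in>UNIV. pyz y z * f (y, z))" by (rule sum_pairs)
    finally show ?thesis .
  qed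
  have EX: "O.expectation (\<lambda>\<omega>. f (\<omega> i)) = integral\<^sup>L (measure_pmf Q) f" for f :: "'y \<times> 'z \<Rightarrow> real" and i
  proof -
    have "integral\<^sup>L (distr Om (measure_pmf Q) (\<lambda>\<omega>. \<omega> i)) f = O.expectation (\<lambda>\<omega>. f (\<omega> i))"
      by (rule integral_distr[OF comp_meas]) simp
    then show ?thesis unfolding dcomp by simp
  qed
  have mean0: "O.expectation (X n) = 0" for n
  proof -
    have "O.expectation (X n) = (\<Sum>y\<in>UNIV. \<Sum>z\<in>UNIV. pyz y z * (idn y z - MI))"
      unfolding X_def EX[of h n] intQ[of h] by (simp add: h_def idp_def)
    also have "\<dots> = (\<Sum>y\<in>UNIV. \<Sum>z\<in>UNIV. pyz y z * idn y z) - (\<Sum>y\<in>UNIV. \<Sum>z\<in>UNIV. pyz y z) * MI"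
      by (simp add: right_diff_distrib sum_subtractf sum_distrib_right)
    finally show ?thesis by (simp add: sum_pyz mutual_info_def)
  qed
  have sqint: "integrable Om (\<lambda>x. (X n x)\<^sup>2)" for n
  proof -
    have "integrable (distr Om (measure_pmf Q) (\<lambda>\<omega>. \<omega> n)) (\<lambda>p. (h p)\<^sup>2)"
      unfolding dcomp by (rule integrable_measure_pmf_finite) simp
    then show ?thesis unfolding X_def by (subst (asm) integrable_distr_eq[OF comp_meas h2_meas])
  qed
  have var: "O.variance (X n) = (sqrt DV)\<^sup>2" for n
  proof -
    have "O.variance (X n) = O.expectation (\<lambda>\<omega>. (h (\<omega> n))\<^sup>2)" by (simp add: mean0 X_def)
    also have "\<dots> = (\<Sum>y\<in>UNIV. \<Sum>z\<in>UNIV. pyz y z * (idn y z - MI)\<^sup>2)"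
      unfolding EX[of "\<lambda>p. (h p)\<^sup>2" n] intQ[of "\<lambda>p. (h p)\<^sup>2"] by (simp add: h_def idp_def)
    also have "\<dots> = DV" by (simp add: dispersion_def)
    finally show ?thesis using V by simp
  qed
  have distrX: "distr Om borel (X n) = distr (measure_pmf Q) borel h" for n
  proof -
    have "distr (distr Om (measure_pmf Q) (\<lambda>\<omega>. \<omega> n)) borel h = distr Om borel (h \<circ> (\<lambda>\<omega>. \<omega> n))"
      by (rule distr_distr[OF h_meas comp_meas])
    then show ?thesis unfolding dcomp X_def by (simp add: comp_def)
  qed
  have wc: "weak_conv_m (\<lambda>n. distr Om borel (\<lambda>x. (\<Sum>i<n. X i x) / sqrt (real n * (sqrt DV)\<^sup>2)))
               std_normal_distribution"
    by (rule O.central_limit_theorem_zero_mean[OF indepX mean0 _ sqint var distrX]) (use V in simp)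
  then have lim: "(\<lambda>n. cdf (distr Om borel (\<lambda>x. (\<Sum>i<n. X i x) / sqrt (real n * (sqrt DV)\<^sup>2))) a)
          \<longlonglongrightarrow> Phi a"
    unfolding weak_conv_m_def weak_conv_def Phi_eq[symmetric] using Phi_cont by blast
  have eq: "cdf (distr Om borel (\<lambda>x. (\<Sum>i<n. X i x) / sqrt (real n * (sqrt DV)\<^sup>2))) a
            = Fn n (real n * MI + a * sqrt (real n * DV))" if n: "n \<ge> 1" for n
  proof -
    have fm: "(\<lambda>x. (\<Sum>i<n. X i x) / sqrt (real n * (sqrt DV)\<^sup>2)) \<in> borel_measurable Om"
      by (intro borel_measurable_divide borel_measurable_sum X_meas borel_measurable_const)
    have sp: "sqrt (real n * (sqrt DV)\<^sup>2) = sqrt (real n * DV)" using V by simp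
    have spos: "sqrt (real n * DV) > 0" using V n by simp
    have "cdf (distr Om borel (\<lambda>x. (\<Sum>i<n. X i x) / sqrt (real n * (sqrt DV)\<^sup>2))) a
        = measure Om ((\<lambda>x. (\<Sum>i<n. X i x) / sqrt (real n * (sqrt DV)\<^sup>2)) -` {..a} \<inter> space Om)"
      unfolding cdf_def by (rule measure_distr[OF fm]) simp
    also have "(\<lambda>x. (\<Sum>i<n. X i x) / sqrt (real n * (sqrt DV)\<^sup>2)) -` {..a} \<inter> space Om =
               {\<omega> \<in> space Om. (\<Sum>i<n. idp (\<omega> i)) \<le> real n * MI + a * sqrt (real n * DV)}"
    proof -
      have "(\<Sum>i<n. X i x) / sqrt (real n * (sqrt DV)\<^sup>2) \<le> a \<longleftrightarrow>
            (\<Sum>i<n. idp (x i)) \<le> real n * MI + a * sqrt (real n * DV)" for x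
      proof -
        have e: "(\<Sum>i<n. X i x) = (\<Sum>i<n. idp (x i)) - real n * MI"
          by (simp add: X_def h_def sum_subtractf)
        have "(\<Sum>i<n. X i x) / sqrt (real n * DV) \<le> a \<longleftrightarrow> (\<Sum>i<n. X i x) \<le> a * sqrt (real n * DV)"
          using spos by (simp add: divide_le_eq)
        then show ?thesis unfolding sp using e by (smt (verit))
      qed
      then show ?thesis by auto
    qed
    finally show ?thesis by (simp add: Fn_measure)
  qed
  have "eventually (\<lambda>n. cdf (distr Om borel (\<lambda>x. (\<Sum>i<n. X i x) / sqrt (real n * (sqrt DV)\<^sup>2))) a
            = Fn n (real n * MI + a * sqrt (real n * DV))) sequentially"
    by (rule eventually_sequentiallyI[of 1]) (rule eq)
  then show ?thesis by (rule Lim_transform_eventually[OF lim])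
qed

end


lemma ev_sqrt: assumes "(d::real) > 0" shows "eventually (\<lambda>n. d * sqrt (real n) \<ge> B) sequentially"
proof (rule eventually_sequentiallyI[of "nat \<lceil>(B/d)\<^sup>2\<rceil>"])
  fix n assume n: "nat \<lceil>(B/d)\<^sup>2\<rceil> \<le> n"
  then have "(B/d)\<^sup>2 \<le> real n" by linarith
  then have "sqrt ((B/d)\<^sup>2) \<le> sqrt (real n)" by (rule real_sqrt_le_mono)
  then have "B/d \<le> sqrt (real n)" by (smt (verit) real_sqrt_abs)
  then show "B \<le> d * sqrt (real n)" using assms by (simp add: divide_le_eq mult.commute)
qed

lemma ev_exp: assumes "(d::real) > 0" "\<eta> > 0" shows "eventually (\<lambda>n. exp (- (d * sqrt (real n))) < \<eta>) sequentially"
  using ev_sqrt[OF assms(1), of "1 - ln \<eta>"]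
proof (rule eventually_mono)
  fix n assume "1 - ln \<eta> \<le> d * sqrt (real n)"
  then have "exp (- (d * sqrt (real n))) \<le> exp (ln \<eta> - 1)" by simp
  also have "\<dots> < exp (ln \<eta>)" by simp
  finally show "exp (- (d * sqrt (real n))) < \<eta>" using assms by simp
qed

lemma floor_half: assumes "(x::real) \<ge> 1" shows "real (nat \<lfloor>x\<rfloor>) \<ge> x / 2" "real (nat \<lfloor>x\<rfloor>) \<le> x" "nat \<lfloor>x\<rfloor> \<ge> 1"
proof -
  have a: "real_of_int \<lfloor>x\<rfloor> > x - 1" by linarith
  have b: "\<lfloor>x\<rfloor> \<ge> 1" using assms by linarith
  show "real (nat \<lfloor>x\<rfloor>) \<ge> x / 2" using a b by linarith
  show "real (nat \<lfloor>x\<rfloor>) \<le> x" using b by linarith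
  show "nat \<lfloor>x\<rfloor> \<ge> 1" using b by linarith
qed

context bio begin

lemma Fn_mono: "s \<le> t \<Longrightarrow> Fn n s \<le> Fn n t"
  unfolding Fn_def by (intro sum_mono mult_left_mono) auto

lemma Fn_top: assumes "\<forall>ys\<in>seqs n. \<forall>zs\<in>seqs n. infn ys zs \<le> t" shows "Fn n t = 1"
  using assms sum_Jn[of n] unfolding Fn_def by simp

definition Sset :: "nat \<Rightarrow> real \<Rightarrow> nat set" where
  "Sset n eps = {M. 1 \<le> M \<and> (\<exists>g. err_prob PX PYX PZX n M g \<le> eps)}"

lemma one_in_Sset: assumes "eps \<ge> 0" shows "1 \<in> Sset n eps"
proof -
  have "err_prob PX PYX PZX n 1 (\<lambda>_ _. 0) = 0" by (simp add: err_red)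
  then have "err_prob PX PYX PZX n 1 (\<lambda>_ _. 0) \<le> eps" using assms by simp
  then show ?thesis unfolding Sset_def by blast
qed

lemma Sset_bounded: assumes "eps < 1" shows "\<exists>B. \<forall>M\<in>Sset n eps. M \<le> B"
proof -
  have fin: "finite ((\<lambda>p. infn (fst p) (snd p)) ` (seqs n \<times> seqs n))" by simp
  define B0 where "B0 = Max (insert 0 ((\<lambda>p. infn (fst p) (snd p)) ` (seqs n \<times> seqs n)))"
  have B0: "\<forall>x\<in>(\<lambda>p. infn (fst p) (snd p)) ` (seqs n \<times> seqs n). x \<le> B0"
    unfolding B0_def using fin by (auto intro!: Max_ge)
  then have B0': "\<forall>ys\<in>seqs n. \<forall>zs\<in>seqs n. infn ys zs \<le> B0" by force
  define \<gamma> where "\<gamma> = - ln ((1 - eps) / 2)"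
  have eg: "exp (- \<gamma>) = (1 - eps) / 2" unfolding \<gamma>_def using assms by simp
  have "M \<le> nat \<lceil>exp (B0 + \<gamma>)\<rceil>" if M: "M \<in> Sset n eps" for M
  proof (rule ccontr)
    assume "\<not> M \<le> nat \<lceil>exp (B0 + \<gamma>)\<rceil>"
    then have lt: "real M > exp (B0 + \<gamma>)" by linarith
    have "real M > 0" using lt exp_gt_zero[of "B0 + \<gamma>"] by linarith
    then have "ln (real M) > B0 + \<gamma>" using lt ln_less_cancel_iff[of "exp (B0+\<gamma>)" "real M"] by simp
    then have F: "Fn n (ln (real M) - \<gamma>) = 1" using B0' by (intro Fn_top) force
    from M obtain g where M1: "M \<ge> 1" and g: "err_prob PX PYX PZX n M g \<le> eps" unfolding Sset_def by auto
    have "1 - err_prob PX PYX PZX n M g \<le> (1 - Fn n (ln (real M) - \<gamma>)) + exp (- \<gamma>)"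
      by (rule converse[OF M1])
    then show False using F g eg assms by simp
  qed
  then show ?thesis by blast
qed

lemma Mstar_props: assumes "0 \<le> eps" "eps < 1"
  shows "Mstar PX PYX PZX n eps \<in> Sset n eps" "\<And>M. M \<in> Sset n eps \<Longrightarrow> M \<le> Mstar PX PYX PZX n eps"
proof -
  have eq: "Mstar PX PYX PZX n eps = Max (Sset n eps)" unfolding Mstar_def Sset_def by simp
  obtain B where B: "\<forall>M\<in>Sset n eps. M \<le> B" using Sset_bounded[OF assms(2)] by blast
  have fin: "finite (Sset n eps)" using B finite_nat_set_iff_bounded_le by blast
  have ne: "Sset n eps \<noteq> {}" using one_in_Sset[OF assms(1)] by blast
  show "Mstar PX PYX PZX n eps \<in> Sset n eps" unfolding eq by (rule Max_in[OF fin ne])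
  show "\<And>M. M \<in> Sset n eps \<Longrightarrow> M \<le> Mstar PX PYX PZX n eps" unfolding eq by (rule Max_ge[OF fin])
qed

end


context bio begin

lemma main_lim:
  assumes eps: "0 < eps" "eps < 1" and V: "DV > 0"
  shows "(\<lambda>n. (ln (real (Mstar PX PYX PZX n eps)) - real n * MI) / sqrt (real n)) \<longlonglongrightarrow> sqrt DV * Phi_inv eps"
proof -
  define c where "c = Phi_inv eps"
  define L where "L = sqrt DV * c"
  define Ms where "Ms n = Mstar PX PYX PZX n eps" for n
  define a where "a n = (ln (real (Ms n)) - real n * MI) / sqrt (real n)" for n
  have Phic: "Phi c = eps" unfolding c_def using Phi_inv eps by simp
  have sV: "sqrt DV > 0" using V by simp
  have clt': "(\<lambda>n. Fn n (real n * MI + b * sqrt (real n))) \<longlonglongrightarrow> Phi (b / sqrt DV)" for b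
  proof -
    have "(b / sqrt DV) * sqrt (real n * DV) = b * sqrt (real n)" for n
      using sV by (simp add: real_sqrt_mult)
    then show ?thesis using clt_Fn[OF V, of "b / sqrt DV"] by simp
  qed
  have MsS: "Ms n \<in> Sset n eps" for n unfolding Ms_def using Mstar_props(1) eps by simp
  have MsB: "M \<in> Sset n eps \<Longrightarrow> M \<le> Ms n" for M n unfolding Ms_def using Mstar_props(2) eps by simp
  have Ms1: "Ms n \<ge> 1" for n using MsS[of n] unfolding Sset_def by simp
  have LB: "eventually (\<lambda>n. a n \<ge> L - 3 * \<delta>) sequentially" if d: "\<delta> > 0" for \<delta>
  proof -
    have "(L - \<delta>) / sqrt DV < c" using sV d unfolding L_def by (simp add: divide_less_eq)
    then have lt: "Phi ((L - \<delta>) / sqrt DV) < eps" using Phi_strict Phic by blast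
    define \<eta> where "\<eta> = (eps - Phi ((L - \<delta>) / sqrt DV)) / 2"
    have \<eta>: "\<eta> > 0" using lt unfolding \<eta>_def by simp
    have gen: "\<And>p e. (p::real) < e \<Longrightarrow> p < e - (e - p) / 2" by (simp add: field_simps)
    have lt2: "Phi ((L - \<delta>) / sqrt DV) < eps - \<eta>" unfolding \<eta>_def by (rule gen[OF lt])
    have e1: "eventually (\<lambda>n. Fn n (real n * MI + (L - \<delta>) * sqrt (real n)) < eps - \<eta>) sequentially"
      by (rule order_tendstoD(2)[OF clt' lt2])
    have e2: "eventually (\<lambda>n. exp (- (\<delta> * sqrt (real n))) < \<eta>) sequentially" by (rule ev_exp[OF d \<eta>])
    have e3: "eventually (\<lambda>n. \<delta> * sqrt (real n) \<ge> ln 2) sequentially" by (rule ev_sqrt[OF d])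
    have e4: "eventually (\<lambda>n. n \<ge> (1::nat)) sequentially" by (rule eventually_ge_at_top)
    show ?thesis using e1 e2 e3 e4
    proof eventually_elim
      case (elim n)
      have sq: "sqrt (real n) > 0" using elim(4) by simp
      define u where "u = real n * MI + sqrt (real n) * (L - 2 * \<delta>)"
      have "ln (real (Ms n)) \<ge> u - \<delta> * sqrt (real n)"
      proof (cases "u < 0")
        case True
        have "ln (real (Ms n)) \<ge> 0" using Ms1[of n] by simp
        then show ?thesis using True d sq by (smt (verit) mult_pos_pos)
      next
        case False
        define x where "x = exp u"
        have x1: "x \<ge> 1" unfolding x_def using False by simp
        define M where "M = nat \<lfloor>x\<rfloor>"
        have M: "M \<ge> 1" "real M \<le> x" "real M \<ge> x / 2" unfolding M_def using floor_half[OF x1] by auto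
        have Mpos: "real M > 0" using M by simp
        have lnM: "ln (real M) \<le> u" using M(2) Mpos unfolding x_def
          by (metis ln_exp ln_le_cancel_iff exp_gt_zero)
        obtain g where g: "err_prob PX PYX PZX n M g \<le> Fn n (ln (real M) + \<delta> * sqrt (real n)) + exp (- (\<delta> * sqrt (real n)))"
          using achievability[OF M(1)] by blast
        have "Fn n (ln (real M) + \<delta> * sqrt (real n)) \<le> Fn n (real n * MI + (L - \<delta>) * sqrt (real n))"
          by (rule Fn_mono) (use lnM in \<open>simp add: u_def algebra_simps\<close>)
        then have "err_prob PX PYX PZX n M g \<le> eps" using g elim(1,2) by linarith
        then have "M \<in> Sset n eps" unfolding Sset_def using M(1) by blast
        then have "M \<le> Ms n" by (rule MsB)
        then have "ln (real M) \<le> ln (real (Ms n))" using Mpos by simp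
        moreover have "ln (x / 2) \<le> ln (real M)" using M(3) x1 by simp
        moreover have "ln (x / 2) = u - ln 2" unfolding x_def by (simp add: ln_div)
        ultimately show ?thesis using elim(3) by linarith
      qed
      then have "ln (real (Ms n)) - real n * MI \<ge> (L - 3 * \<delta>) * sqrt (real n)"
        unfolding u_def by (simp add: algebra_simps)
      then show "a n \<ge> L - 3 * \<delta>" unfolding a_def using sq by (simp add: le_divide_eq)
    qed
  qed
  have UB: "eventually (\<lambda>n. a n \<le> L + 2 * \<delta>) sequentially" if d: "\<delta> > 0" for \<delta>
  proof -
    have "(L + \<delta>) / sqrt DV > c" using sV d unfolding L_def by (simp add: less_divide_eq)
    then have lt: "Phi ((L + \<delta>) / sqrt DV) > eps" using Phi_strict Phic by blast
    define \<eta> where "\<eta> = (Phi ((L + \<delta>) / sqrt DV) - eps) / 2"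
    have \<eta>: "\<eta> > 0" using lt unfolding \<eta>_def by simp
    have gen: "\<And>p e. (e::real) < p \<Longrightarrow> e + (p - e) / 2 < p" by (simp add: field_simps)
    have lt2: "eps + \<eta> < Phi ((L + \<delta>) / sqrt DV)" unfolding \<eta>_def by (rule gen[OF lt])
    have e1: "eventually (\<lambda>n. Fn n (real n * MI + (L + \<delta>) * sqrt (real n)) > eps + \<eta>) sequentially"
      by (rule order_tendstoD(1)[OF clt' lt2])
    have e2: "eventually (\<lambda>n. exp (- (\<delta> * sqrt (real n))) < \<eta>) sequentially" by (rule ev_exp[OF d \<eta>])
    have e4: "eventually (\<lambda>n. n \<ge> (1::nat)) sequentially" by (rule eventually_ge_at_top)
    show ?thesis using e1 e2 e4
    proof eventually_elim
      case (elim n)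
      have sq: "sqrt (real n) > 0" using elim(3) by simp
      obtain g where g: "err_prob PX PYX PZX n (Ms n) g \<le> eps" using MsS[of n] unfolding Sset_def by blast
      have "1 - err_prob PX PYX PZX n (Ms n) g \<le> (1 - Fn n (ln (real (Ms n)) - \<delta> * sqrt (real n))) + exp (- (\<delta> * sqrt (real n)))"
        by (rule converse[OF Ms1])
      then have "Fn n (ln (real (Ms n)) - \<delta> * sqrt (real n)) < Fn n (real n * MI + (L + \<delta>) * sqrt (real n))"
        using g elim(1,2) by linarith
      then have "ln (real (Ms n)) - \<delta> * sqrt (real n) < real n * MI + (L + \<delta>) * sqrt (real n)"
        using Fn_mono by (meson not_le)
      then have "ln (real (Ms n)) - real n * MI \<le> (L + 2 * \<delta>) * sqrt (real n)"
        by (simp add: algebra_simps)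
      then show "a n \<le> L + 2 * \<delta>" unfolding a_def using sq by (simp add: divide_le_eq)
    qed
  qed
  have "a \<longlonglongrightarrow> L"
  proof (rule order_tendstoI)
    fix b assume b: "b < L"
    show "eventually (\<lambda>n. b < a n) sequentially"
    proof -
      have "eventually (\<lambda>n. L - 3 * ((L - b) / 6) \<le> a n) sequentially" using b by (intro LB) simp
      then show ?thesis
      proof (rule eventually_mono)
        fix n assume "L - 3 * ((L - b) / 6) \<le> a n"
        moreover have "L - 3 * ((L - b) / 6) = (L + b) / 2" by (simp add: field_simps)
        moreover have "b < (L + b) / 2" using b by (simp add: field_simps)
        ultimately show "b < a n" by linarith
      qed
    qed
  next
    fix b assume b: "L < b"
    show "eventually (\<lambda>n. a n < b) sequentially"
    proof -
      have "eventually (\<lambda>n. a n \<le> L + 2 * ((b - L) / 4)) sequentially" using b by (intro UB) simp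
      then show ?thesis
      proof (rule eventually_mono)
        fix n assume "a n \<le> L + 2 * ((b - L) / 4)"
        moreover have "L + 2 * ((b - L) / 4) = (L + b) / 2" by (simp add: field_simps)
        moreover have "(L + b) / 2 < b" using b by (simp add: field_simps)
        ultimately show "a n < b" by linarith
      qed
    qed
  qed
  then show ?thesis unfolding a_def L_def c_def Ms_def .
qed

end

theorem theorem8:
  fixes PX :: "'x::finite pmf" and PYX :: "'x \<Rightarrow> 'y::finite pmf"
    and PZX :: "'x \<Rightarrow> 'z::finite pmf" and eps :: real
  assumes "0 < eps" and "eps < 1"
    and "dispersion PX PYX PZX > 0"
  shows "liminf (\<lambda>n. ereal ((ln (real (Mstar PX PYX PZX n eps))
                    - real n * mutual_info PX PYX PZX) / sqrt (real n)))
         = ereal (sqrt (dispersion PX PYX PZX) * Phi_inv eps)"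
proof -
  interpret bio PX PYX PZX .
  have "(\<lambda>n. ereal ((ln (real (Mstar PX PYX PZX n eps)) - real n * mutual_info PX PYX PZX) / sqrt (real n)))
        \<longlonglongrightarrow> ereal (sqrt (dispersion PX PYX PZX) * Phi_inv eps)"
    using main_lim[OF assms] by (simp add: lim_ereal)
  then show ?thesis by (intro lim_imp_Liminf) simp_all
qed


end
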